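(* Let $G$ be a graph with $n\ge5$ vertices that has a fractional weak $r$-neighborhood cover $(\mathcal X,f)$ with degree $d$ and spread $s$. Then $G$ has a weak $r$-neighborhood cover $\mathcal Y\subseteq\mathcal X$ with degree $36\ln(n)\,d$ and spread $s$.
   Context: A fractional weak $r$-neighborhood cover with degree $d$ and spread $s$ of $G$ is a family $\mathcal X$ of subsets of $V(G)$ with a function $f\colon\mathcal X\to[0,1]$ such that each $X\in\mathcal X$ is contained in $N_s[c]$ for some vertex $c$; for every vertex $v$, $\sum_{X\in\mathcal X:\,N_r[v]\subseteq X}f(X)\ge1$; and for every vertex $v$, $\sum_{X\in\mathcal X:\,v\in X}f(X)\le d$. A (non-fractional) weak $r$-neighborhood cover with degree $d$ and spread $s$ is a family of vertex sets, each contained in some $N_s[c]$, such that each $N_r[w]$ is contained in some member and each vertex lies in at most $d$ members. *)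

theory Defs
  imports Complex_Main
begin

definition graph :: "'a set \<Rightarrow> ('a \<Rightarrow> 'a \<Rightarrow> bool) \<Rightarrow> bool" where
  "graph V E \<longleftrightarrow> finite V \<and> (\<forall>u v. E u v \<longrightarrow> u \<in> V \<and> v \<in> V)
     \<and> (\<forall>u v. E u v \<longrightarrow> E v u) \<and> (\<forall>u. \<not> E u u)"

fun nbh :: "'a set \<Rightarrow> ('a \<Rightarrow> 'a \<Rightarrow> bool) \<Rightarrow> nat \<Rightarrow> 'a \<Rightarrow> 'a set" where
  "nbh V E 0 v = {v}"
| "nbh V E (Suc k) v = nbh V E k v \<union> {u \<in> V. \<exists>w \<in> nbh V E k v. E w u}"

definition frac_weak_nbh_cover ::
  "'a set \<Rightarrow> ('a \<Rightarrow> 'a \<Rightarrow> bool) \<Rightarrow> nat \<Rightarrow> real \<Rightarrow> nat \<Rightarrow> 'a set set \<Rightarrow> ('a set \<Rightarrow> real) \<Rightarrow> bool" where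
  "frac_weak_nbh_cover V E r d s \<X> f \<longleftrightarrow>
     \<X> \<subseteq> Pow V
   \<and> (\<forall>X\<in>\<X>. 0 \<le> f X \<and> f X \<le> 1)
   \<and> (\<forall>X\<in>\<X>. \<exists>c\<in>V. X \<subseteq> nbh V E s c)
   \<and> (\<forall>v\<in>V. (\<Sum>X\<in>{X\<in>\<X>. nbh V E r v \<subseteq> X}. f X) \<ge> 1)
   \<and> (\<forall>v\<in>V. (\<Sum>X\<in>{X\<in>\<X>. v \<in> X}. f X) \<le> d)"

definition weak_nbh_cover ::
  "'a set \<Rightarrow> ('a \<Rightarrow> 'a \<Rightarrow> bool) \<Rightarrow> nat \<Rightarrow> real \<Rightarrow> nat \<Rightarrow> 'a set set \<Rightarrow> bool" where
  "weak_nbh_cover V E r d s \<Y> \<longleftrightarrow>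
     \<Y> \<subseteq> Pow V
   \<and> (\<forall>Y\<in>\<Y>. \<exists>c\<in>V. Y \<subseteq> nbh V E s c)
   \<and> (\<forall>w\<in>V. \<exists>Y\<in>\<Y>. nbh V E r w \<subseteq> Y)
   \<and> (\<forall>v\<in>V. real (card {Y\<in>\<Y>. v \<in> Y}) \<le> d)"

end

theory Submission
  imports Defs
begin

definition ld :: "'a set set \<Rightarrow> 'a \<Rightarrow> nat" where "ld S u = card {Y\<in>S. u\<in>Y}"
definition Lp :: "'a set \<Rightarrow> 'a set set \<Rightarrow> real" where "Lp V S = (\<Sum>u\<in>V. exp (real (ld S u)))"
definition unc :: "'a set \<Rightarrow> ('a\<Rightarrow>'a\<Rightarrow>bool) \<Rightarrow> nat \<Rightarrow> 'a set set \<Rightarrow> 'a set" where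
  "unc V E r S = {w\<in>V. \<not>(\<exists>Y\<in>S. nbh V E r w \<subseteq> Y)}"
definition cov :: "'a set \<Rightarrow> ('a\<Rightarrow>'a\<Rightarrow>bool) \<Rightarrow> nat \<Rightarrow> 'a set set \<Rightarrow> 'a set \<Rightarrow> nat" where
  "cov V E r S X = card {w \<in> unc V E r S. nbh V E r w \<subseteq> X}"
definition Dp :: "'a set set \<Rightarrow> 'a set \<Rightarrow> real" where
  "Dp S X = (exp 1 - 1) * (\<Sum>u\<in>X. exp (real (ld S u)))"

lemma card_filter_sum: "finite U \<Longrightarrow> real (card {w\<in>U. P w}) = (\<Sum>w\<in>U. if P w then 1 else 0)"
  by (simp add: sum.If_cases Int_def conj_commute)

lemma avg:
  assumes fin: "finite V" and XP: "\<X> \<subseteq> Pow V" and fpos: "\<forall>X\<in>\<X>. 0 \<le> f X"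
    and cov1: "\<forall>v\<in>V. (\<Sum>X\<in>{X\<in>\<X>. nbh V E r v \<subseteq> X}. f X) \<ge> 1"
    and deg: "\<forall>v\<in>V. (\<Sum>X\<in>{X\<in>\<X>. v\<in>X}. f X) \<le> d"
    and ne: "unc V E r S \<noteq> {}"
  shows "\<exists>X\<in>\<X>. cov V E r S X > 0 \<and>
     real (card (unc V E r S)) * Dp S X \<le> real (cov V E r S X) * ((exp 1 - 1) * d * Lp V S)"
proof (rule ccontr)
  assume neg: "\<not> ?thesis"
  define U where "U = unc V E r S"
  have fX: "finite \<X>" using XP fin by (meson finite_Pow_iff finite_subset)
  have fU: "finite U" unfolding U_def unc_def using fin by simp
  have UV: "U \<subseteq> V" unfolding U_def unc_def by auto
  have h1: "(\<Sum>X\<in>\<X>. f X * real (cov V E r S X)) \<ge> real (card U)"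
  proof -
    have "(\<Sum>X\<in>\<X>. f X * real (cov V E r S X)) = (\<Sum>X\<in>\<X>. \<Sum>w\<in>U. if nbh V E r w \<subseteq> X then f X else 0)"
      unfolding cov_def U_def[symmetric]
      by (simp add: card_filter_sum[OF fU] sum_distrib_left if_distrib cong: if_cong)
    also have "\<dots> = (\<Sum>w\<in>U. \<Sum>X\<in>\<X>. if nbh V E r w \<subseteq> X then f X else 0)"
      by (rule sum.swap)
    also have "\<dots> = (\<Sum>w\<in>U. \<Sum>X\<in>{X\<in>\<X>. nbh V E r w \<subseteq> X}. f X)"
      by (simp add: sum.inter_filter[OF fX])
    also have "\<dots> \<ge> (\<Sum>w\<in>U. 1)"
      by (rule sum_mono) (use cov1 UV in auto)
    finally show ?thesis by simp
  qed
  have h2: "(\<Sum>X\<in>\<X>. f X * Dp S X) \<le> (exp 1 - 1) * d * Lp V S"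
  proof -
    have "(\<Sum>X\<in>\<X>. f X * Dp S X) = (\<Sum>X\<in>\<X>. \<Sum>u\<in>V. (exp 1 - 1) * (if u \<in> X then f X * exp (real (ld S u)) else 0))"
    proof (rule sum.cong[OF refl])
      fix X assume "X \<in> \<X>"
      hence XV: "X \<subseteq> V" using XP by auto
      have "{u\<in>V. u\<in>X} = X" using XV by auto
      hence "(\<Sum>u\<in>X. exp (real (ld S u))) = (\<Sum>u\<in>V. if u\<in>X then exp (real (ld S u)) else 0)"
        using sum.inter_filter[OF fin, of "\<lambda>u. exp (real (ld S u))" "\<lambda>u. u\<in>X"] by simp
      thus "f X * Dp S X = (\<Sum>u\<in>V. (exp 1 - 1) * (if u \<in> X then f X * exp (real (ld S u)) else 0))"
        unfolding Dp_def by (simp add: sum_distrib_left if_distrib mult.assoc mult.left_commute cong: if_cong)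
    qed
    also have "\<dots> = (\<Sum>u\<in>V. \<Sum>X\<in>\<X>. (exp 1 - 1) * (if u \<in> X then f X * exp (real (ld S u)) else 0))"
      by (rule sum.swap)
    also have "\<dots> = (\<Sum>u\<in>V. (exp 1 - 1) * exp (real (ld S u)) * (\<Sum>X\<in>{X\<in>\<X>. u\<in>X}. f X))"
    proof (rule sum.cong[OF refl])
      fix u
      have "(\<Sum>X\<in>\<X>. (exp 1 - 1) * (if u \<in> X then f X * exp (real (ld S u)) else 0))
          = (\<Sum>X\<in>\<X>. if u \<in> X then (exp 1 - 1) * exp (real (ld S u)) * f X else 0)"
        by (intro sum.cong refl) simp
      also have "\<dots> = (\<Sum>X\<in>{X\<in>\<X>. u\<in>X}. (exp 1 - 1) * exp (real (ld S u)) * f X)"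
        by (rule sum.inter_filter[OF fX, symmetric])
      also have "\<dots> = (exp 1 - 1) * exp (real (ld S u)) * (\<Sum>X\<in>{X\<in>\<X>. u\<in>X}. f X)"
        by (rule sum_distrib_left[symmetric])
      finally show "(\<Sum>X\<in>\<X>. (exp 1 - 1) * (if u \<in> X then f X * exp (real (ld S u)) else 0)) = \<dots>" .
    qed
    also have "\<dots> \<le> (\<Sum>u\<in>V. (exp 1 - 1) * exp (real (ld S u)) * d)"
    proof (rule sum_mono)
      fix u assume "u \<in> V"
      have "exp 1 - 1 \<ge> (0::real)" by simp
      then show "(exp 1 - 1) * exp (real (ld S u)) * (\<Sum>X\<in>{X\<in>\<X>. u\<in>X}. f X) \<le> (exp 1 - 1) * exp (real (ld S u)) * d"
        using deg \<open>u\<in>V\<close> by (intro mult_left_mono) auto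
    qed
    also have "\<dots> = (exp 1 - 1) * d * Lp V S"
      unfolding Lp_def by (simp add: sum_distrib_left sum_distrib_right mult_ac)
    finally show ?thesis .
  qed
  have Upos: "real (card U) > 0" using ne fU U_def by (simp add: card_gt_0_iff)
  have dpos: "d \<ge> 0"
  proof -
    obtain w where "w \<in> U" using ne U_def by auto
    hence wV: "w \<in> V" using UV by auto
    have "1 \<le> (\<Sum>X\<in>{X\<in>\<X>. nbh V E r w \<subseteq> X}. f X)" using cov1 wV by auto
    hence "\<exists>X\<in>{X\<in>\<X>. nbh V E r w \<subseteq> X}. True" by (metis (no_types, lifting) empty_iff not_one_le_zero sum.neutral) 
    moreover have "(\<Sum>X\<in>{X\<in>\<X>. w\<in>X}. f X) \<ge> 0" using fpos by (intro sum_nonneg) auto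
    ultimately show ?thesis using deg wV by (meson order.trans)
  qed
  have Lpos: "Lp V S \<ge> 0" unfolding Lp_def by (simp add: sum_nonneg)
  have cL: "(exp 1 - 1) * d * Lp V S \<ge> 0" using dpos Lpos by simp
  have termle: "\<And>X. X \<in> \<X> \<Longrightarrow> f X * real (cov V E r S X) * ((exp 1 - 1) * d * Lp V S) \<le> f X * (real (card U) * Dp S X)"
  proof -
    fix X assume X: "X \<in> \<X>"
    have D0: "Dp S X \<ge> 0" unfolding Dp_def by (simp add: sum_nonneg)
    show "f X * real (cov V E r S X) * ((exp 1 - 1) * d * Lp V S) \<le> f X * (real (card U) * Dp S X)"
    proof (cases "cov V E r S X = 0")
      case True thus ?thesis using fpos X D0 Upos by simp
    next
      case False
      hence "real (cov V E r S X) * ((exp 1 - 1) * d * Lp V S) < real (card U) * Dp S X"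
        using neg X U_def by auto
      thus ?thesis using fpos X by (simp add: mult.assoc mult_left_mono)
    qed
  qed
  obtain X0 where X0: "X0 \<in> \<X>" "f X0 * real (cov V E r S X0) > 0"
  proof -
    have "(\<Sum>X\<in>\<X>. f X * real (cov V E r S X)) > 0" using h1 Upos by linarith
    have "\<exists>X0\<in>\<X>. f X0 * real (cov V E r S X0) \<noteq> 0"
    proof (rule ccontr)
      assume "\<not> ?thesis"
      hence "(\<Sum>X\<in>\<X>. f X * real (cov V E r S X)) = 0" by (intro sum.neutral) auto
      thus False using \<open>(\<Sum>X\<in>\<X>. f X * real (cov V E r S X)) > 0\<close> by simp
    qed
    then obtain X0 where "X0 \<in> \<X>" "f X0 * real (cov V E r S X0) \<noteq> 0" by blast
    moreover have "f X0 * real (cov V E r S X0) \<ge> 0" using fpos \<open>X0 \<in> \<X>\<close> by simp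
    ultimately show ?thesis using that by force
  qed
  have strict: "f X0 * real (cov V E r S X0) * ((exp 1 - 1) * d * Lp V S) < f X0 * (real (card U) * Dp S X0)"
  proof -
    have fp: "f X0 > 0" "cov V E r S X0 > 0" using X0 fpos
      by (auto simp: zero_less_mult_iff)
    hence "real (cov V E r S X0) * ((exp 1 - 1) * d * Lp V S) < real (card U) * Dp S X0"
      using neg X0 U_def by auto
    thus ?thesis using fp by (simp add: mult.assoc)
  qed
  have "(\<Sum>X\<in>\<X>. f X * real (cov V E r S X) * ((exp 1 - 1) * d * Lp V S)) < (\<Sum>X\<in>\<X>. f X * (real (card U) * Dp S X))"
    using sum_strict_mono_ex1[OF fX, of "\<lambda>X. f X * real (cov V E r S X) * ((exp 1 - 1) * d * Lp V S)" "\<lambda>X. f X * (real (card U) * Dp S X)"]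
      termle strict X0(1) by blast
  also have "\<dots> = real (card U) * (\<Sum>X\<in>\<X>. f X * Dp S X)"
    by (simp add: sum_distrib_left mult_ac)
  also have "\<dots> \<le> real (card U) * ((exp 1 - 1) * d * Lp V S)"
    using h2 Upos by (simp add: mult_left_mono)
  finally have "(\<Sum>X\<in>\<X>. f X * real (cov V E r S X)) * ((exp 1 - 1) * d * Lp V S) < real (card U) * ((exp 1 - 1) * d * Lp V S)"
    by (simp add: sum_distrib_right)
  moreover have "(\<Sum>X\<in>\<X>. f X * real (cov V E r S X)) * ((exp 1 - 1) * d * Lp V S) \<ge> real (card U) * ((exp 1 - 1) * d * Lp V S)"
    using h1 cL by (simp add: mult_right_mono)
  ultimately show False by simp
qed

lemma ld_insert:
  assumes "finite S" "X \<notin> S"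
  shows "ld (insert X S) u = ld S u + (if u \<in> X then 1 else 0)"
proof (cases "u \<in> X")
  case True
  hence "{Y\<in>insert X S. u\<in>Y} = insert X {Y\<in>S. u\<in>Y}" by auto
  thus ?thesis using assms True unfolding ld_def by simp
next
  case False
  hence "{Y\<in>insert X S. u\<in>Y} = {Y\<in>S. u\<in>Y}" by auto
  thus ?thesis using False unfolding ld_def by simp
qed

lemma Lp_insert:
  assumes "finite V" "finite S" "X \<notin> S" "X \<subseteq> V"
  shows "Lp V (insert X S) = Lp V S + Dp S X"
proof -
  have "Lp V (insert X S) = (\<Sum>u\<in>V. exp (real (ld S u)) + (if u \<in> X then (exp 1 - 1) * exp (real (ld S u)) else 0))"
    unfolding Lp_def
  proof (rule sum.cong[OF refl])
    fix u
    show "exp (real (ld (insert X S) u)) = exp (real (ld S u)) + (if u \<in> X then (exp 1 - 1) * exp (real (ld S u)) else 0)"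
      using ld_insert[OF assms(2,3)] by (simp add: exp_add algebra_simps)
  qed
  also have "\<dots> = Lp V S + (\<Sum>u\<in>V. if u \<in> X then (exp 1 - 1) * exp (real (ld S u)) else 0)"
    unfolding Lp_def by (simp add: sum.distrib)
  also have "(\<Sum>u\<in>V. if u \<in> X then (exp 1 - 1) * exp (real (ld S u)) else 0) = (\<Sum>u\<in>{u\<in>V. u\<in>X}. (exp 1 - 1) * exp (real (ld S u)))"
    by (rule sum.inter_filter[OF assms(1), symmetric])
  also have "{u\<in>V. u\<in>X} = X" using assms(4) by auto
  finally show ?thesis unfolding Dp_def by (simp add: sum_distrib_left)
qed

lemma greedy:
  assumes fin: "finite V" and XP: "\<X> \<subseteq> Pow V" and fpos: "\<forall>X\<in>\<X>. 0 \<le> f X"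
    and cov1: "\<forall>v\<in>V. (\<Sum>X\<in>{X\<in>\<X>. nbh V E r v \<subseteq> X}. f X) \<ge> 1"
    and deg: "\<forall>v\<in>V. (\<Sum>X\<in>{X\<in>\<X>. v\<in>X}. f X) \<le> d"
    and dpos: "0 \<le> d" and n: "n = real (card V)"
  shows "\<forall>S A. S \<subseteq> \<X> \<longrightarrow> card (unc V E r S) \<le> k \<longrightarrow> Lp V S \<le> n * exp ((exp 1 - 1) * d * A)
     \<longrightarrow> real (card (unc V E r S)) \<le> n * exp (- A) \<longrightarrow> A \<le> ln n + 1
     \<longrightarrow> (\<exists>S'. S \<subseteq> S' \<and> S' \<subseteq> \<X> \<and> unc V E r S' = {} \<and> Lp V S' \<le> n * exp ((exp 1 - 1) * d * (ln n + 1)))"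
proof (induction k)
  define c where "c = (exp 1 - 1) * d"
  have c0: "c \<ge> 0" unfolding c_def using dpos by simp
  have n0: "n \<ge> 0" using n by simp
  have base: "\<exists>S'. S \<subseteq> S' \<and> S' \<subseteq> \<X> \<and> unc V E r S' = {} \<and> Lp V S' \<le> n * exp ((exp 1 - 1) * d * (ln n + 1))"
    if "S \<subseteq> \<X>" "unc V E r S = {}" "Lp V S \<le> n * exp ((exp 1 - 1) * d * A)" "A \<le> ln n + 1" for S A
  proof -
    have "c * A \<le> c * (ln n + 1)" using c0 that(4) by (simp add: mult_left_mono)
    hence "n * exp (c * A) \<le> n * exp (c * (ln n + 1))" using n0 by (simp add: mult_left_mono)
    thus ?thesis using that unfolding c_def by (intro exI[of _ S]) auto
  qed
  {
    case 0
    show ?case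
    proof (intro allI impI)
      fix S A assume h: "S \<subseteq> \<X>" "card (unc V E r S) \<le> 0" "Lp V S \<le> n * exp ((exp 1 - 1) * d * A)"
        "real (card (unc V E r S)) \<le> n * exp (- A)" "A \<le> ln n + 1"
      have "finite (unc V E r S)" unfolding unc_def using fin by simp
      hence "unc V E r S = {}" using h(2) by simp
      thus "\<exists>S'. S \<subseteq> S' \<and> S' \<subseteq> \<X> \<and> unc V E r S' = {} \<and> Lp V S' \<le> n * exp ((exp 1 - 1) * d * (ln n + 1))"
        using base h by blast
    qed
  next
    case (Suc k)
    show ?case
    proof (intro allI impI)
      fix S A assume h: "S \<subseteq> \<X>" "card (unc V E r S) \<le> Suc k" "Lp V S \<le> n * exp ((exp 1 - 1) * d * A)"
        "real (card (unc V E r S)) \<le> n * exp (- A)" "A \<le> ln n + 1"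
      show "\<exists>S'. S \<subseteq> S' \<and> S' \<subseteq> \<X> \<and> unc V E r S' = {} \<and> Lp V S' \<le> n * exp ((exp 1 - 1) * d * (ln n + 1))"
      proof (cases "unc V E r S = {}")
        case True thus ?thesis using base h by blast
      next
        case False
        have fX: "finite \<X>" using XP fin by (meson finite_Pow_iff finite_subset)
        have fS: "finite S" using h(1) fX finite_subset by blast
        have fU: "finite (unc V E r S)" unfolding unc_def using fin by simp
        obtain X where X: "X \<in> \<X>" "cov V E r S X > 0"
          "real (card (unc V E r S)) * Dp S X \<le> real (cov V E r S X) * ((exp 1 - 1) * d * Lp V S)"
          using avg[OF fin XP fpos cov1 deg False] by blast
        define U where "U = real (card (unc V E r S))"
        define cv where "cv = real (cov V E r S X)"
        define L where "L = Lp V S"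
        define a where "a = cv / U"
        have U1: "U \<ge> 1" using False fU unfolding U_def by (simp add: Suc_le_eq card_gt_0_iff)
        have XV: "X \<subseteq> V" using X(1) XP by auto
        obtain w where w: "w \<in> unc V E r S" "nbh V E r w \<subseteq> X"
          using X(2) unfolding cov_def by (metis (no_types, lifting) card.empty empty_Collect_eq less_irrefl)
        have XS: "X \<notin> S" using w unfolding unc_def by auto
        have unc': "unc V E r (insert X S) = unc V E r S - {w\<in>unc V E r S. nbh V E r w \<subseteq> X}"
          unfolding unc_def by auto
        have cvU: "cov V E r S X \<le> card (unc V E r S)" unfolding cov_def by (rule card_mono[OF fU]) auto
        have cU': "real (card (unc V E r (insert X S))) = U - cv"
          unfolding unc' U_def cv_def cov_def using fU cvU unfolding cov_def
          by (subst card_Diff_subset) (auto simp: of_nat_diff)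
        have L': "Lp V (insert X S) = L + Dp S X" unfolding L_def by (rule Lp_insert[OF fin fS XS XV])
        have L0: "L \<ge> 0" unfolding L_def Lp_def by (simp add: sum_nonneg)
        have a0: "a \<ge> 0" "a \<le> 1" unfolding a_def cv_def using U1 cvU U_def by (auto simp: field_simps)
        have Dle: "Dp S X \<le> c * a * L"
        proof -
          have e: "U * (c * a * L) = cv * ((exp 1 - 1) * d * L)" unfolding a_def c_def using U1 by (simp add: field_simps)
          have "U * Dp S X \<le> U * (c * a * L)"
            using X(3) unfolding e U_def[symmetric] cv_def[symmetric] L_def[symmetric] .
          thus ?thesis using U1 by simp
        qed
        have A1: "A \<le> ln n"
        proof -
          have "1 \<le> n * exp (- A)" using U1 h(4) U_def by simp
          hence npos: "n > 0" using n0 by (cases "n = 0") auto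
          have "ln 1 \<le> ln (n * exp (- A))" using \<open>1 \<le> n * exp (- A)\<close> by (subst ln_le_cancel_iff) auto
          thus ?thesis using npos by (simp add: ln_mult)
        qed
        have newL: "Lp V (insert X S) \<le> n * exp ((exp 1 - 1) * d * (A + a))"
        proof -
          have "Lp V (insert X S) \<le> L * (1 + c * a)" using L' Dle by (simp add: algebra_simps)
          also have "\<dots> \<le> L * exp (c * a)" using L0 by (intro mult_left_mono) auto
          also have "\<dots> \<le> n * exp (c * A) * exp (c * a)" using h(3) L_def c_def by (intro mult_right_mono) auto
          also have "\<dots> = n * exp (c * (A + a))" by (simp add: exp_add algebra_simps)
          finally show ?thesis unfolding c_def .
        qed
        have newU: "real (card (unc V E r (insert X S))) \<le> n * exp (- (A + a))"
        proof -
          have "U - cv = U * (1 - a)" unfolding a_def using U1 by (simp add: field_simps)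
          also have "\<dots> \<le> U * exp (- a)" using U1 by (intro mult_left_mono) (auto simp: exp_ge_add_one_self[of "- a", simplified])
          also have "\<dots> \<le> n * exp (- A) * exp (- a)" using h(4) U_def by (intro mult_right_mono) auto
          also have "\<dots> = n * exp (- (A + a))" by (simp add: mult.assoc flip: exp_add)
          finally show ?thesis using cU' by simp
        qed
        have cardlt: "card (unc V E r (insert X S)) \<le> k"
        proof -
          have "real (card (unc V E r (insert X S))) < U" using cU' X(2) cv_def by simp
          hence "card (unc V E r (insert X S)) < card (unc V E r S)" unfolding U_def by simp
          thus ?thesis using h(2) by simp
        qed
        have "A + a \<le> ln n + 1" using A1 a0 by simp
        then obtain S' where S': "insert X S \<subseteq> S'" "S' \<subseteq> \<X>" "unc V E r S' = {}"
            "Lp V S' \<le> n * exp ((exp 1 - 1) * d * (ln n + 1))"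
          using Suc.IH[rule_format, of "insert X S" "A + a"] h(1) X(1) cardlt newL newU by blast
        thus ?thesis by blast
      qed
    qed
  }
qed

lemma nbh_self: "v \<in> nbh V E r v"
  by (induction r) auto

theorem lemma6p5:
  fixes V :: "'a set" and E :: "'a \<Rightarrow> 'a \<Rightarrow> bool"
    and r s :: nat and d :: real and \<X> :: "'a set set" and f :: "'a set \<Rightarrow> real"
  assumes "graph V E"
    and "card V \<ge> 5"
    and "frac_weak_nbh_cover V E r d s \<X> f"
  shows "\<exists>\<Y> \<subseteq> \<X>. weak_nbh_cover V E r (36 * ln (real (card V)) * d) s \<Y>"
proof -
  have fin: "finite V" using assms(1) unfolding graph_def by simp
  have XP: "\<X> \<subseteq> Pow V" and fpos: "\<forall>X\<in>\<X>. 0 \<le> f X"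
    and spr: "\<forall>X\<in>\<X>. \<exists>c\<in>V. X \<subseteq> nbh V E s c"
    and cov1: "\<forall>v\<in>V. (\<Sum>X\<in>{X\<in>\<X>. nbh V E r v \<subseteq> X}. f X) \<ge> 1"
    and deg: "\<forall>v\<in>V. (\<Sum>X\<in>{X\<in>\<X>. v\<in>X}. f X) \<le> d"
    using assms(3) unfolding frac_weak_nbh_cover_def by auto
  have fX: "finite \<X>" using XP fin by (meson finite_Pow_iff finite_subset)
  define n where "n = real (card V)"
  have n5: "n \<ge> 5" using assms(2) n_def by simp
  obtain v where v: "v \<in> V" using assms(2) by fastforce
  have d1: "d \<ge> 1"
  proof -
    have "1 \<le> (\<Sum>X\<in>{X\<in>\<X>. nbh V E r v \<subseteq> X}. f X)" using cov1 v by auto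
    also have "\<dots> \<le> (\<Sum>X\<in>{X\<in>\<X>. v\<in>X}. f X)"
      using nbh_self[of v V E r] fpos fX by (intro sum_mono2) auto
    also have "\<dots> \<le> d" using deg v by auto
    finally show ?thesis .
  qed
  have lnn: "ln n \<ge> 1"
  proof -
    have "exp 1 \<le> n" using exp_le n5 by linarith
    hence "ln (exp 1) \<le> ln n" using n5 by (subst ln_le_cancel_iff) auto
    thus ?thesis by simp
  qed
  have ld0: "Lp V {} = n" unfolding Lp_def ld_def n_def by simp
  have u0: "real (card (unc V E r {})) \<le> n * exp (- 0)"
    unfolding n_def using card_mono[OF fin, of "unc V E r {}"] by (simp add: unc_def)
  obtain S' where S': "S' \<subseteq> \<X>" "unc V E r S' = {}" "Lp V S' \<le> n * exp ((exp 1 - 1) * d * (ln n + 1))"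
    using greedy[OF fin XP fpos cov1 deg _ n_def, of "card (unc V E r {})", rule_format, of "{}" 0] d1 ld0 u0 lnn
    by auto
  have degS: "real (card {Y\<in>S'. u\<in>Y}) \<le> 36 * ln n * d" if u: "u \<in> V" for u
  proof -
    have "exp (real (ld S' u)) \<le> Lp V S'"
      unfolding Lp_def using u fin by (intro member_le_sum) auto
    also have "\<dots> \<le> n * exp ((exp 1 - 1) * d * (ln n + 1))" by (rule S'(3))
    finally have "ln (exp (real (ld S' u))) \<le> ln (n * exp ((exp 1 - 1) * d * (ln n + 1)))"
      using n5 by (subst ln_le_cancel_iff) auto
    hence l: "real (ld S' u) \<le> ln n + (exp 1 - 1) * d * (ln n + 1)" using n5 by (simp add: ln_mult)
    have e2: "exp 1 - 1 \<le> (2::real)" using exp_le by linarith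
    have "(exp 1 - 1) * d * (ln n + 1) \<le> 2 * d * (2 * ln n)"
    proof -
      have "(exp 1 - 1) * d \<le> 2 * d" using e2 d1 by (intro mult_right_mono) auto
      moreover have "ln n + 1 \<le> 2 * ln n" using lnn by simp
      ultimately show ?thesis using d1 lnn
        by (intro mult_mono) (auto intro: mult_nonneg_nonneg)
    qed
    moreover have "ln n \<le> d * ln n" using d1 lnn by (simp add: mult_right_mono[of 1 d, simplified])
    ultimately have "real (ld S' u) \<le> 5 * (d * ln n)" using l by linarith
    also have "\<dots> \<le> 36 * (d * ln n)" using d1 lnn by simp
    finally show ?thesis unfolding ld_def by (simp add: mult_ac)
  qed
  have "weak_nbh_cover V E r (36 * ln (real (card V)) * d) s S'"
    unfolding weak_nbh_cover_def
  proof (intro conjI)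
    show "S' \<subseteq> Pow V" using S'(1) XP by auto
    show "\<forall>Y\<in>S'. \<exists>c\<in>V. Y \<subseteq> nbh V E s c" using S'(1) spr by auto
    show "\<forall>w\<in>V. \<exists>Y\<in>S'. nbh V E r w \<subseteq> Y" using S'(2) unfolding unc_def by auto
    show "\<forall>v\<in>V. real (card {Y\<in>S'. v\<in>Y}) \<le> 36 * ln (real (card V)) * d"
      using degS n_def by auto
  qed
  thus ?thesis using S'(1) by blast
qed

end
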